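(* Let $\ell\ge 2$ be an integer and let $\mathbf{a}=(a_1,\ldots,a_\ell)\in\mathbf{Z}^\ell$ with $\sum_{j=1}^\ell a_j=0$. Put $\lambda=\pi_\ell(\mathbf{a})$ and $k=\lambda_1$ (so $\lambda\in\mathcal{C}_\ell^k$). Let $i$ be the largest index such that $a_i=\max\{a_1,\ldots,a_\ell\}$. Then \[ \pi_{\ell-1}^{-1}\big(\Phi_\ell^k(\lambda)\big)=\psi_{\ell-1}^{\,a_i}\big(a_1,\ldots,a_{i-1},a_{i+1},\ldots,a_\ell\big), \] where $\psi_{\ell-1}^{\,a_i}$ denotes the $a_i$-fold iterate of $\psi_{\ell-1}$ (note $a_i\ge 0$).
   Context: Partitions are drawn as Young diagrams in English notation; box $(x,y)$ lies in row $x$ and column $y$. The hook length $h^{\lambda}_{(a,c)}$ of a box $(a,c)$ of $\lambda$ is the number of boxes of $\lambda$ in row $a$ weakly to the right of $(a,c)$ plus the number of boxes of $\lambda$ in column $c$ strictly below $(a,c)$. For an integer $m\ge 1$, a partition is an $m$-core if no box has hook length divisible by $m$. $\mathcal{C}_m$ denotes the set of $m$-cores, $\mathcal{C}_m^k$ those with first part equal to $k$, and $\mathcal{C}_m^{\le k}$ those with first part $\le k$. For $m\ge1$ and $\mathbf{c}=(c_1,\ldots,c_m)\in\mathbf{Z}^m$ with $\sum c_j=0$, let $X(\mathbf{c})=\{rm+(j-1): 1\le j\le m,\ r\in\mathbf{Z},\ r\le c_j\}\subset\mathbf{Z}$, and let $\pi_m(\mathbf{c})$ be the partition whose nonzero parts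 (in weakly decreasing order) are the positive values among the numbers $\#\{y\in\mathbf{Z}\setminus X(\mathbf{c}): y<x\}$, $x\in X(\mathbf{c})$. It is known that $\pi_m$ is a bijection from $\{\mathbf{c}\in\mathbf{Z}^m:\sum c_j=0\}$ onto $\mathcal{C}_m$. For $\lambda\in\mathcal{C}_\ell^k$, $\Phi_\ell^k(\lambda)$ is the partition obtained from the Young diagram of $\lambda$ by deleting every row $x$ with $h^\lambda_{(x,1)}\equiv h^\lambda_{(1,1)}\pmod{\ell}$ (in particular row 1); it is known that $\Phi_\ell^k$ is a bijection $\mathcal{C}_\ell^k\to\mathcal{C}_{\ell-1}^{\le k}$. For $m\ge1$, $\psi_m:\mathbf{Z}^m\to\mathbf{Z}^m$ is the map $\psi_m(c_1,\ldots,c_m)=(c_m+1,c_1,c_2,\ldots,c_{m-1})$. *)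

theory Defs
  imports Main
begin

text \<open>A vector \<open>c \<in> Z^m\<close> is a list of integers of length m;
  its j-th coordinate (1-based) is \<open>c ! (j-1)\<close>.
  A partition is a list of positive naturals in weakly decreasing order
  (its nonzero parts); row x (1-based) has length \<open>lam ! (x-1)\<close>.\<close>

definition Xset :: "nat \<Rightarrow> int list \<Rightarrow> int set" where
  "Xset m c = {r * int m + (int j - 1) | j r. 1 \<le> j \<and> j \<le> m \<and> r \<le> c ! (j - 1)}"

definition gapcount :: "nat \<Rightarrow> int list \<Rightarrow> int \<Rightarrow> nat" where
  "gapcount m c x = card {y :: int. y \<notin> Xset m c \<and> y < x}"

definition pi_core :: "nat \<Rightarrow> int list \<Rightarrow> nat list" where
  "pi_core m c = rev (sort (map (gapcount m c)
      (sorted_list_of_set {x \<in> Xset m c. 0 < gapcount m c x})))"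

definition hook :: "nat list \<Rightarrow> nat \<Rightarrow> nat \<Rightarrow> nat" where
  "hook lam a c = card {y. c \<le> y \<and> y \<le> lam ! (a - 1)}
                 + card {x. a < x \<and> x \<le> length lam \<and> c \<le> lam ! (x - 1)}"

text \<open>\<open>Phi_l^k\<close> (k = first part of lam): delete every row x with
  \<open>h(x,1) \<equiv> h(1,1) (mod l)\<close>.\<close>
definition Phi :: "nat \<Rightarrow> nat list \<Rightarrow> nat list" where
  "Phi l lam = map (\<lambda>x. lam ! (x - 1))
     (filter (\<lambda>x. hook lam x 1 mod l \<noteq> hook lam 1 1 mod l) [1..<length lam + 1])"

definition psi :: "int list \<Rightarrow> int list" where
  "psi c = (last c + 1) # butlast c"

end

theory Submission
  imports Defs "HOL-Library.Multiset"
begin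


lemma divmod_aux:
  fixes m :: int assumes "0 < m" "0 \<le> t" "t < m"
  shows "(r * m + t) div m = r" "(r * m + t) mod m = t"
  using assms by (simp_all add: div_add1_eq mod_pos_pos_trivial div_pos_pos_trivial)

lemma Xset_mem:
  assumes "0 < m"
  shows "y \<in> Xset m c \<longleftrightarrow> y div int m \<le> c ! nat (y mod int m)"
proof
  assume "y \<in> Xset m c"
  then obtain j r where h: "y = r * int m + (int j - 1)" "1 \<le> j" "j \<le> m" "r \<le> c ! (j - 1)"
    unfolding Xset_def by blast
  have "y div int m = r" "y mod int m = int j - 1"
    using divmod_aux[of "int m" "int j - 1" r] h assms by auto
  then show "y div int m \<le> c ! nat (y mod int m)" using h
    by (metis nat_int of_nat_1 of_nat_diff)
next
  assume h: "y div int m \<le> c ! nat (y mod int m)"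
  define j where "j = nat (y mod int m) + 1"
  have y: "y = (y div int m) * int m + (int j - 1)" using assms by (simp add: j_def)
  have "y mod int m < int m" using assms by simp
  moreover have "0 \<le> y mod int m" using assms by simp
  ultimately have j: "1 \<le> j" "j \<le> m" unfolding j_def by linarith+
  have "c ! (j - 1) = c ! nat (y mod int m)" by (simp add: j_def)
  then show "y \<in> Xset m c" unfolding Xset_def using h y j
    by (intro CollectI exI[of _ j] exI[of _ "y div int m"]) auto
qed
definition gc :: "int set \<Rightarrow> int \<Rightarrow> nat" where
  "gc S x = card {y. y \<notin> S \<and> y < x}"
definition Bs :: "int set \<Rightarrow> int set" where
  "Bs S = {x \<in> S. 0 < gc S x}"
definition pp :: "int set \<Rightarrow> nat list" where
  "pp S = rev (sort (map (gc S) (sorted_list_of_set (Bs S))))"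
definition nice :: "int set \<Rightarrow> bool" where
  "nice S = ((\<exists>u. \<forall>y\<in>S. y \<le> u) \<and> (\<exists>lo. \<forall>y. y < lo \<longrightarrow> y \<in> S) \<and> (\<exists>y. y \<notin> S))"

lemma pi_core_pp: "pi_core m c = pp (Xset m c)"
proof -
  have "gapcount m c = gc (Xset m c)" by (rule ext) (simp add: gapcount_def gc_def)
  then show ?thesis by (simp add: pi_core_def pp_def Bs_def)
qed

lemma gc_fin: assumes "nice S" shows "finite {y. y \<notin> S \<and> y < x}"
proof -
  obtain lo where lo: "\<And>y. y < lo \<Longrightarrow> y \<in> S" using assms nice_def by blast
  have "{y. y \<notin> S \<and> y < x} \<subseteq> {lo..<x}"
  proof
    fix y assume "y \<in> {y. y \<notin> S \<and> y < x}"
    then have "y \<notin> S" "y < x" by auto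
    then have "\<not> y < lo" using lo by blast
    then show "y \<in> {lo..<x}" using \<open>y < x\<close> by simp
  qed
  then show ?thesis by (rule finite_subset) simp
qed

lemma gc_pos: assumes "nice S" shows "0 < gc S x \<longleftrightarrow> (\<exists>y. y \<notin> S \<and> y < x)"
  using gc_fin[OF assms, of x] unfolding gc_def by (auto simp: card_gt_0_iff)

lemma Bs_fin: assumes "nice S" shows "finite (Bs S)"
proof -
  obtain lo where lo: "\<And>y. y < lo \<Longrightarrow> y \<in> S" using assms nice_def by blast
  obtain u where u0: "\<forall>y\<in>S. y \<le> u" using assms unfolding nice_def by blast
  then have u: "\<And>y. y \<in> S \<Longrightarrow> y \<le> u" by blast
  have "Bs S \<subseteq> {lo..u}"
  proof
    fix x assume "x \<in> Bs S"
    then have "x \<in> S" "0 < gc S x" by (auto simp: Bs_def)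
    then have "\<exists>y. y \<notin> S \<and> y < x" using gc_pos[OF assms] by simp
    then obtain y where "y \<notin> S" "y < x" by blast
    then have "\<not> y < lo" using lo by blast
    moreover have "x \<le> u" using u \<open>x \<in> S\<close> by blast
    ultimately show "x \<in> {lo..u}" using \<open>y < x\<close> by simp
  qed
  then show ?thesis by (rule finite_subset) simp
qed

lemma gc_mono: assumes "nice S" "x \<le> x'" shows "gc S x \<le> gc S x'"
  unfolding gc_def using assms by (intro card_mono gc_fin) auto

lemma sort_mset_eq: "mset xs = mset ys \<Longrightarrow> sort xs = sort ys"
  by (rule properties_for_sort) auto

lemma map_sorted_mset: assumes "finite A"
  shows "mset (map f (sorted_list_of_set A)) = image_mset f (mset_set A)"
proof -
  have "mset (sorted_list_of_set A) = mset_set A"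
    using mset_set_set[of "sorted_list_of_set A"] assms by simp
  then show ?thesis by simp
qed

lemma mem_trans: "y \<in> (\<lambda>x. x + (d::int)) ` S \<longleftrightarrow> y - d \<in> S"
proof
  assume "y \<in> (\<lambda>x. x + d) ` S" then show "y - d \<in> S" by auto
next
  assume "y - d \<in> S"
  moreover have "y = (y - d) + d" by simp
  ultimately show "y \<in> (\<lambda>x. x + d) ` S" by (rule rev_image_eqI)
qed

lemma nice_trans: assumes "nice S" shows "nice ((\<lambda>x. x + (d::int)) ` S)"
proof -
  obtain lo where lo: "\<And>y. y < lo \<Longrightarrow> y \<in> S" using assms nice_def by blast
  obtain u where u0: "\<forall>y\<in>S. y \<le> u" using assms unfolding nice_def by blast
  then have u: "\<And>y. y \<in> S \<Longrightarrow> y \<le> u" by blast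
  obtain z where z: "z \<notin> S" using assms unfolding nice_def by blast
  have "\<forall>y\<in>(\<lambda>x. x + d) ` S. y \<le> u + d" using u by auto
  moreover have "\<forall>y. y < lo + d \<longrightarrow> y \<in> (\<lambda>x. x + d) ` S" using lo by (auto simp: mem_trans)
  moreover have "z + d \<notin> (\<lambda>x. x + d) ` S" using z by (auto simp: mem_trans)
  ultimately show ?thesis unfolding nice_def by blast
qed

lemma gc_trans: "gc ((\<lambda>x. x + (d::int)) ` S) (x + d) = gc S x"
proof -
  have "{y. y \<notin> (\<lambda>x. x + d) ` S \<and> y < x + d} = (\<lambda>x. x + d) ` {y. y \<notin> S \<and> y < x}"
    by (auto simp: mem_trans image_iff intro!: exI[of _ "_ - d"])
  then show ?thesis unfolding gc_def by (simp add: card_image)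
qed

lemma Bs_trans: "Bs ((\<lambda>x. x + (d::int)) ` S) = (\<lambda>x. x + d) ` Bs S"
  unfolding Bs_def using gc_trans[of d S] by (auto simp: image_iff)

lemma pp_trans: assumes "nice S" shows "pp ((\<lambda>x. x + (d::int)) ` S) = pp S"
proof -
  let ?T = "(\<lambda>x. x + d) ` S"
  have fT: "finite (Bs ?T)" using Bs_fin[OF nice_trans[OF assms]] .
  have fS: "finite (Bs S)" using Bs_fin[OF assms] .
  have "mset (map (gc ?T) (sorted_list_of_set (Bs ?T))) = image_mset (gc ?T) (mset_set (Bs ?T))"
    by (rule map_sorted_mset[OF fT])
  also have "\<dots> = image_mset (gc ?T) (mset_set ((\<lambda>x. x + d) ` Bs S))"
    by (simp add: Bs_trans)
  also have "\<dots> = image_mset (gc ?T) (image_mset (\<lambda>x. x + d) (mset_set (Bs S)))"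
    by (simp add: image_mset_mset_set)
  also have "\<dots> = image_mset (gc S) (mset_set (Bs S))"
    by (simp add: multiset.map_comp comp_def gc_trans)
  also have "\<dots> = mset (map (gc S) (sorted_list_of_set (Bs S)))"
    by (rule map_sorted_mset[OF fS, symmetric])
  finally show ?thesis unfolding pp_def by (metis sort_mset_eq)
qed
lemma Xset_mem_rj:
  assumes "0 < m" "j < m"
  shows "r * int m + int j \<in> Xset m c \<longleftrightarrow> r \<le> c ! j"
proof -
  have "(r * int m + int j) div int m = r" "(r * int m + int j) mod int m = int j"
    using divmod_aux[of "int m" "int j" r] assms by auto
  then show ?thesis using Xset_mem[OF assms(1)] by simp
qed

lemma Xset_inj:
  assumes "0 < m" "length c = m" "length c' = m" "Xset m c = Xset m c'"
  shows "c = c'"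
proof (rule nth_equalityI)
  show "length c = length c'" using assms by simp
  fix j assume "j < length c"
  then have j: "j < m" using assms by simp
  have "\<And>r. r \<le> c ! j \<longleftrightarrow> r \<le> c' ! j"
    using Xset_mem_rj[OF assms(1) j] assms(4) by metis
  then show "c ! j = c' ! j" by (meson order_antisym order_refl)
qed

lemma div_le_bound:
  fixes y M :: int assumes "0 < m" "y div m \<le> M" shows "y < (M + 1) * m"
proof -
  have e: "y = (y div m) * m + y mod m" by simp
  have a: "y mod m < m" using assms by simp
  have b: "(y div m) * m \<le> M * m" using assms by (simp add: mult_right_mono)
  have "(M + 1) * m = M * m + m" by (simp add: algebra_simps)
  then show ?thesis using e a b by linarith
qed

lemma div_ge_bound:
  fixes y M :: int assumes "0 < m" "y < M * m" shows "y div m < M"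
proof (rule ccontr)
  assume "\<not> y div m < M"
  then have "M * m \<le> (y div m) * m" using assms by (simp add: mult_right_mono)
  moreover have "y = (y div m) * m + y mod m" by simp
  moreover have "0 \<le> y mod m" using assms by simp
  ultimately show False using assms by linarith
qed

lemma nth_mod_in_set:
  assumes "0 < m" "length c = m" shows "c ! nat (y mod int m) \<in> set c"
proof -
  have "y mod int m < int m" "0 \<le> y mod int m" using assms by simp_all
  then have "nat (y mod int m) < length c" using assms by linarith
  then show ?thesis by simp
qed

lemma nice_Xset:
  assumes "0 < m" "length c = m" shows "nice (Xset m c)"
proof -
  have ne: "set c \<noteq> {}" using assms by auto
  define M where "M = Max (set c)"
  define N where "N = Min (set c)"
  have M: "\<And>y. c ! nat (y mod int m) \<le> M" unfolding M_def
    using nth_mod_in_set[OF assms] by simp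
  have N: "\<And>y. N \<le> c ! nat (y mod int m)" unfolding N_def
    using nth_mod_in_set[OF assms] by simp
  have "\<forall>y\<in>Xset m c. y \<le> (M + 1) * int m"
  proof
    fix y assume "y \<in> Xset m c"
    then have "y div int m \<le> M" using Xset_mem[OF assms(1)] M order_trans by blast
    then show "y \<le> (M + 1) * int m" using div_le_bound[of "int m" y M] assms by simp
  qed
  moreover have "\<forall>y. y < N * int m \<longrightarrow> y \<in> Xset m c"
  proof (intro allI impI)
    fix y assume "y < N * int m"
    then have "y div int m < N" using div_ge_bound[of "int m" y N] assms by simp
    then show "y \<in> Xset m c" using Xset_mem[OF assms(1)] N
      by (meson order.strict_trans2 less_imp_le)
  qed
  moreover have "(M + 1) * int m \<notin> Xset m c"
  proof
    assume "(M + 1) * int m \<in> Xset m c"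
    then have "M + 1 \<le> c ! 0" using Xset_mem_rj[OF assms(1), of 0 "M+1" c] assms by simp
    moreover have "c ! 0 \<le> M" unfolding M_def using assms by simp
    ultimately show False by simp
  qed
  ultimately show ?thesis unfolding nice_def by blast
qed
lemma Xset_psi_mem:
  assumes "0 < m" "length c = m"
  shows "z \<in> Xset m (psi c) \<longleftrightarrow> z - 1 \<in> Xset m c"
proof -
  define q where "q = (z - 1) div int m"
  define j where "j = nat ((z - 1) mod int m)"
  have jm: "j < m" unfolding j_def using assms
    by (metis Euclidean_Rings.pos_mod_bound Euclidean_Rings.pos_mod_sign nat_less_iff of_nat_0_less_iff)
  have z1: "z - 1 = q * int m + int j" unfolding q_def j_def using assms by simp
  have c0: "c \<noteq> []" using assms by auto
  show ?thesis
  proof (cases "j + 1 < m")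
    case True
    have z: "z = q * int m + int (j + 1)" using z1 by simp
    have "psi c ! (j + 1) = c ! j"
      unfolding psi_def using True assms by (simp add: nth_butlast)
    moreover have "z \<in> Xset m (psi c) \<longleftrightarrow> q \<le> psi c ! (j + 1)"
      using Xset_mem_rj[OF assms(1) True, of q "psi c"] z by metis
    moreover have "z - 1 \<in> Xset m c \<longleftrightarrow> q \<le> c ! j"
      using Xset_mem_rj[OF assms(1) jm, of q c] z1 by metis
    ultimately show ?thesis by simp
  next
    case False
    then have jj: "j = m - 1" using jm by simp
    have z: "z = (q + 1) * int m + int 0" using z1 jj assms by (simp add: algebra_simps of_nat_diff)
    have "psi c ! 0 = c ! j + 1"
      unfolding psi_def using jj c0 assms by (simp add: last_conv_nth)
    moreover have "z \<in> Xset m (psi c) \<longleftrightarrow> q + 1 \<le> psi c ! 0"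
      using Xset_mem_rj[OF assms(1) assms(1), of "q+1" "psi c"] z by metis
    moreover have "z - 1 \<in> Xset m c \<longleftrightarrow> q \<le> c ! j"
      using Xset_mem_rj[OF assms(1) jm, of q c] z1 by metis
    ultimately show ?thesis by simp
  qed
qed

lemma psi_length: "c \<noteq> [] \<Longrightarrow> length (psi c) = length c"
  by (simp add: psi_def)

lemma psi_sum: "c \<noteq> [] \<Longrightarrow> sum_list (psi c) = sum_list c + 1"
proof -
  assume "c \<noteq> []"
  then have "sum_list c = sum_list (butlast c) + last c"
    by (metis append_butlast_last_id sum_list_append sum_list_simps add.commute add_0)
  then show ?thesis by (simp add: psi_def)
qed

lemma Xset_psi:
  assumes "0 < m" "length c = m"
  shows "Xset m (psi c) = (\<lambda>x. x + 1) ` Xset m c"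
  using Xset_psi_mem[OF assms] mem_trans[of _ 1] by blast

lemma psi_pow:
  assumes "0 < m" "length c = m"
  shows "length ((psi ^^ n) c) = m \<and> sum_list ((psi ^^ n) c) = sum_list c + int n
     \<and> Xset m ((psi ^^ n) c) = (\<lambda>x. x + int n) ` Xset m c"
proof (induction n)
  case 0 then show ?case using assms by simp
next
  case (Suc n)
  let ?c = "(psi ^^ n) c"
  have ne: "?c \<noteq> []" using Suc assms by auto
  have "Xset m (psi ?c) = (\<lambda>x. x + 1) ` ((\<lambda>x. x + int n) ` Xset m c)"
    using Xset_psi[OF assms(1), of ?c] Suc by simp
  also have "\<dots> = (\<lambda>x. x + int (Suc n)) ` Xset m c"
    by (simp add: image_image algebra_simps)
  finally show ?case using Suc ne psi_length psi_sum by simp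
qed
lemma exists_g0: assumes "nice S" shows "\<exists>g0. g0 \<notin> S \<and> (\<forall>y<g0. y \<in> S)"
proof -
  obtain lo where lo: "\<And>y. y < lo \<Longrightarrow> y \<in> S" using assms unfolding nice_def by blast
  obtain z where z: "z \<notin> S" using assms unfolding nice_def by blast
  define A where "A = {y. y \<notin> S \<and> y \<le> z}"
  have "A \<subseteq> {lo..z}"
  proof
    fix y assume "y \<in> A"
    then have "y \<notin> S" "y \<le> z" by (auto simp: A_def)
    then have "\<not> y < lo" using lo by blast
    then show "y \<in> {lo..z}" using \<open>y \<le> z\<close> by simp
  qed
  then have fA: "finite A" by (rule finite_subset) simp
  have zA: "z \<in> A" using z by (simp add: A_def)
  define g where "g = Min A"
  have "g \<in> A" unfolding g_def using fA zA by (intro Min_in) auto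
  then have "g \<notin> S" "g \<le> z" by (auto simp: A_def)
  moreover have "\<forall>y<g. y \<in> S"
  proof (intro allI impI)
    fix y assume "y < g"
    show "y \<in> S"
    proof (rule ccontr)
      assume "y \<notin> S"
      then have "y \<in> A" using \<open>y < g\<close> \<open>g \<le> z\<close> by (simp add: A_def)
      then have "g \<le> y" unfolding g_def using fA by simp
      then show False using \<open>y < g\<close> by simp
    qed
  qed
  ultimately show ?thesis by blast
qed

lemma map_filter_nth:
  "map (\<lambda>x. f (ys ! (x - 1))) (filter (\<lambda>x. Q (ys ! (x - 1))) [1..<length ys + 1]) = map f (filter Q ys)"
proof -
  have "[1..<length ys + 1] = map Suc [0..<length ys]" by (simp add: map_Suc_upt)
  then have "map (\<lambda>x. f (ys ! (x - 1))) (filter (\<lambda>x. Q (ys ! (x - 1))) [1..<length ys + 1])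
     = map (\<lambda>x. f (ys ! x)) (filter (\<lambda>x. Q (ys ! x)) [0..<length ys])"
    by (simp add: filter_map comp_def)
  also have "\<dots> = map f (map (\<lambda>x. ys ! x) (filter (\<lambda>x. Q (ys ! x)) [0..<length ys]))" by simp
  also have "\<dots> = map f (filter Q (map (\<lambda>x. ys ! x) [0..<length ys]))" by (simp add: filter_map comp_def)
  also have "\<dots> = map f (filter Q ys)" by (simp add: map_nth)
  finally show ?thesis .
qed

lemma mod_shift_iff:
  fixes b M g :: int assumes "g < b" "g < M" "0 < l"
  shows "nat (b - g) mod l = nat (M - g) mod l \<longleftrightarrow> b mod int l = M mod int l"
proof -
  have "nat (b - g) mod l = nat (M - g) mod l \<longleftrightarrow> int (nat (b - g) mod l) = int (nat (M - g) mod l)"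
    by simp
  also have "\<dots> \<longleftrightarrow> (b - g) mod int l = (M - g) mod int l"
    using assms by (simp add: of_nat_mod)
  also have "\<dots> \<longleftrightarrow> b mod int l = M mod int l"
    by (metis diff_add_cancel mod_add_cong mod_diff_cong)
  finally show ?thesis .
qed

definition NF :: "nat list \<Rightarrow> int set" where
  "NF L = {y. y < 0} \<union> {int (L ! k) + int k | k. k < length L}"

context
  fixes S :: "int set" and g0 :: int
  assumes nS: "nice S" and g0: "g0 \<notin> S" and below: "\<And>y. y < g0 \<Longrightarrow> y \<in> S"
begin

lemma gap_ge: "y \<notin> S \<Longrightarrow> g0 \<le> y"
  using below by force

lemma Bs_char: "x \<in> Bs S \<longleftrightarrow> x \<in> S \<and> g0 < x"
proof -
  have "0 < gc S x \<longleftrightarrow> g0 < x"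
  proof
    assume "0 < gc S x"
    then obtain y where "y \<notin> S" "y < x" using gc_pos[OF nS] by blast
    then show "g0 < x" using gap_ge by fastforce
  next
    assume "g0 < x" then show "0 < gc S x" using gc_pos[OF nS] g0 by blast
  qed
  then show ?thesis by (simp add: Bs_def)
qed

lemma key_count:
  assumes "x \<in> S" "g0 < x"
  shows "int (gc S x) + int (card {b \<in> Bs S. b < x}) = x - g0"
proof -
  have eq: "{g0..<x} = {y. y \<notin> S \<and> y < x} \<union> {b \<in> Bs S. b < x}"
  proof
    show "{g0..<x} \<subseteq> {y. y \<notin> S \<and> y < x} \<union> {b \<in> Bs S. b < x}"
    proof
      fix y assume y: "y \<in> {g0..<x}"
      show "y \<in> {y. y \<notin> S \<and> y < x} \<union> {b \<in> Bs S. b < x}"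
      proof (cases "y \<in> S")
        case True
        then have "y \<noteq> g0" using g0 by auto
        then have "g0 < y" using y by simp
        then show ?thesis using True y Bs_char by simp
      next
        case False then show ?thesis using y by simp
      qed
    qed
  next
    show "{y. y \<notin> S \<and> y < x} \<union> {b \<in> Bs S. b < x} \<subseteq> {g0..<x}"
      using gap_ge Bs_char by fastforce
  qed
  have f1: "finite {y. y \<notin> S \<and> y < x}" by (rule gc_fin[OF nS])
  have f2: "finite {b \<in> Bs S. b < x}" using Bs_fin[OF nS] by simp
  have "card {g0..<x} = gc S x + card {b \<in> Bs S. b < x}"
    unfolding eq gc_def by (rule card_Un_disjoint[OF f1 f2]) (auto simp: Bs_def)
  moreover have "int (card {g0..<x}) = x - g0" using assms by simp
  ultimately show ?thesis by (metis of_nat_add)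
qed

definition bs where "bs = sorted_list_of_set (Bs S)"

lemma set_bs: "set bs = Bs S" unfolding bs_def using Bs_fin[OF nS] by simp

lemma bs_strict: "sorted_wrt (<) bs" unfolding bs_def by (rule strict_sorted_list_of_set)

lemma bs_less_iff: "j < length bs \<Longrightarrow> k < length bs \<Longrightarrow> bs ! j < bs ! k \<longleftrightarrow> j < k"
  using bs_strict by (metis linorder_neqE_nat not_less_iff_gr_or_eq sorted_wrt_nth_less)

lemma card_below:
  assumes "k < length bs" shows "card {b \<in> Bs S. b < bs ! k} = k"
proof -
  have "{b \<in> Bs S. b < bs ! k} = (\<lambda>j. bs ! j) ` {..<k}"
  proof
    show "{b \<in> Bs S. b < bs ! k} \<subseteq> (\<lambda>j. bs ! j) ` {..<k}"
    proof
      fix b assume b: "b \<in> {b \<in> Bs S. b < bs ! k}"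
      then obtain j where j: "j < length bs" "b = bs ! j" using set_bs by (metis (no_types, lifting) in_set_conv_nth mem_Collect_eq)
      then have "j < k" using b bs_less_iff[OF j(1) assms] by simp
      then show "b \<in> (\<lambda>j. bs ! j) ` {..<k}" using j by auto
    qed
  next
    show "(\<lambda>j. bs ! j) ` {..<k} \<subseteq> {b \<in> Bs S. b < bs ! k}"
    proof
      fix b assume "b \<in> (\<lambda>j. bs ! j) ` {..<k}"
      then obtain j where j: "j < k" "b = bs ! j" by auto
      then have jl: "j < length bs" using assms by simp
      then have "b \<in> Bs S" using j set_bs nth_mem by metis
      moreover have "b < bs ! k" using bs_less_iff[OF jl assms] j by simp
      ultimately show "b \<in> {b \<in> Bs S. b < bs ! k}" by simp
    qed
  qed
  moreover have "inj_on (\<lambda>j. bs ! j) {..<k}"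
    using bs_less_iff assms by (intro inj_onI) (metis lessThan_iff order.strict_trans less_irrefl linorder_neqE_nat)
  ultimately show ?thesis by (simp add: card_image)
qed

lemma bs_val: assumes "k < length bs"
  shows "bs ! k - g0 = int (gc S (bs ! k)) + int k"
proof -
  have "bs ! k \<in> Bs S" using assms set_bs nth_mem by metis
  then have "bs ! k \<in> S" "g0 < bs ! k" using Bs_char by auto
  then have "int (gc S (bs ! k)) + int (card {b \<in> Bs S. b < bs ! k}) = bs ! k - g0"
    by (rule key_count)
  then show ?thesis using card_below[OF assms] by simp
qed

lemma pp_bs: "pp S = rev (map (gc S) bs)"
proof -
  have "sorted bs" unfolding bs_def by simp
  moreover have "mono_on (set bs) (gc S)" using gc_mono[OF nS] by (simp add: mono_on_def)
  ultimately have "sorted (map (gc S) bs)" by (rule sorted_map_mono)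
  then show ?thesis unfolding pp_def bs_def[symmetric] by (simp add: sorted_sort_id)
qed

lemma normal_form: "(\<lambda>x. x + (- g0)) ` S = NF (rev (pp S))"
proof
  show "(\<lambda>x. x + (- g0)) ` S \<subseteq> NF (rev (pp S))"
  proof
    fix y assume "y \<in> (\<lambda>x. x + (- g0)) ` S"
    then obtain x where x: "x \<in> S" "y = x - g0" by auto
    show "y \<in> NF (rev (pp S))"
    proof (cases "x < g0")
      case True then show ?thesis using x by (simp add: NF_def)
    next
      case False
      then have "g0 < x" using x g0 by (metis le_less not_le)
      then have "x \<in> set bs" using set_bs Bs_char x by simp
      then obtain k where k: "k < length bs" "x = bs ! k" by (metis in_set_conv_nth)
      then have "y = int (rev (pp S) ! k) + int k \<and> k < length (rev (pp S))"
        using bs_val x by (simp add: pp_bs)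
      then show ?thesis unfolding NF_def by blast
    qed
  qed
next
  show "NF (rev (pp S)) \<subseteq> (\<lambda>x. x + (- g0)) ` S"
  proof
    fix y assume "y \<in> NF (rev (pp S))"
    then consider "y < 0" | k where "k < length bs" "y = int (map (gc S) bs ! k) + int k"
      by (auto simp: NF_def pp_bs)
    then show "y \<in> (\<lambda>x. x + (- g0)) ` S"
    proof cases
      case 1
      then have "y + g0 \<in> S" using below by simp
      then show ?thesis by (rule rev_image_eqI) simp
    next
      case 2
      then have "bs ! k \<in> Bs S" using set_bs nth_mem by metis
      then have "bs ! k \<in> S" using Bs_char by simp
      moreover have "y = bs ! k + (- g0)" using 2 bs_val by simp
      ultimately show ?thesis by (rule rev_image_eqI)
    qed
  qed
qed

lemma hook_pp:
  assumes "1 \<le> x" "x \<le> length bs"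
  shows "hook (pp S) x 1 = nat (rev bs ! (x - 1) - g0)" and "pp S ! (x - 1) = gc S (rev bs ! (x - 1))"
proof -
  let ?n = "length bs"
  have r: "rev bs ! (x - 1) = bs ! (?n - x)" using assms by (simp add: rev_nth)
  have nx: "?n - x < ?n" using assms by simp
  show lx: "pp S ! (x - 1) = gc S (rev bs ! (x - 1))" using assms by (simp add: pp_bs rev_map)
  have pos: "\<And>x'. 1 \<le> x' \<Longrightarrow> x' \<le> ?n \<Longrightarrow> 1 \<le> pp S ! (x' - 1)"
  proof -
    fix x' assume a: "1 \<le> x'" "x' \<le> ?n"
    then have "rev bs ! (x' - 1) \<in> Bs S" using set_bs by (metis One_nat_def Suc_le_eq diff_less length_rev less_le_trans nth_mem set_rev zero_less_one)
    then have "0 < gc S (rev bs ! (x' - 1))" by (simp add: Bs_def)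
    then show "1 \<le> pp S ! (x' - 1)" using a by (simp add: pp_bs rev_map)
  qed
  have lp: "length (pp S) = ?n" by (simp add: pp_bs)
  have c1: "card {y. 1 \<le> y \<and> y \<le> pp S ! (x - 1)} = pp S ! (x - 1)"
  proof -
    have "{y. 1 \<le> y \<and> y \<le> pp S ! (x - 1)} = {1..pp S ! (x - 1)}" by auto
    then show ?thesis by simp
  qed
  have c2: "card {x'. x < x' \<and> x' \<le> length (pp S) \<and> 1 \<le> pp S ! (x' - 1)} = ?n - x"
  proof -
    have "{x'. x < x' \<and> x' \<le> length (pp S) \<and> 1 \<le> pp S ! (x' - 1)} = {x<..?n}"
      using pos assms lp by auto
    then show ?thesis by simp
  qed
  have "hook (pp S) x 1 = pp S ! (x - 1) + (?n - x)"
    unfolding hook_def c1 c2 by simp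
  also have "\<dots> = gc S (bs ! (?n - x)) + (?n - x)" using lx r by simp
  also have "\<dots> = nat (bs ! (?n - x) - g0)" using bs_val[OF nx] by simp
  finally show "hook (pp S) x 1 = nat (rev bs ! (x - 1) - g0)" using r by simp
qed

lemma Phi_pp:
  assumes "0 < l"
  shows "Phi l (pp S) = rev (map (gc S) (filter (\<lambda>b. b mod int l \<noteq> last bs mod int l) bs))"
proof (cases "bs = []")
  case True then show ?thesis by (simp add: Phi_def pp_bs)
next
  case False
  let ?n = "length bs"
  let ?ys = "rev bs"
  have gt: "\<And>b. b \<in> set bs \<Longrightarrow> g0 < b" using set_bs Bs_char by auto
  have "rev bs ! 0 = last bs" using False by (simp add: rev_nth last_conv_nth)
  then have h1: "hook (pp S) 1 1 = nat (last bs - g0)"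
    using hook_pp(1)[of 1] False by (simp add: Suc_le_eq)
  have "Phi l (pp S) = map (\<lambda>x. pp S ! (x - 1))
     (filter (\<lambda>x. hook (pp S) x 1 mod l \<noteq> hook (pp S) 1 1 mod l) [1..<length ?ys + 1])"
    by (simp add: Phi_def pp_bs)
  also have "\<dots> = map (\<lambda>x. gc S (?ys ! (x - 1)))
     (filter (\<lambda>x. (\<lambda>b. b mod int l \<noteq> last bs mod int l) (?ys ! (x - 1))) [1..<length ?ys + 1])"
  proof -
    have A: "\<And>x. x \<in> set [1..<length ?ys + 1] \<Longrightarrow>
      (hook (pp S) x 1 mod l \<noteq> hook (pp S) 1 1 mod l) = (?ys ! (x - 1) mod int l \<noteq> last bs mod int l)"
    proof -
      fix x assume "x \<in> set [1..<length ?ys + 1]"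
      then have x: "1 \<le> x" "x \<le> ?n" by auto
      then have "?ys ! (x - 1) \<in> set bs" by (metis One_nat_def Suc_le_eq diff_less length_rev less_le_trans nth_mem set_rev zero_less_one)
      then have "g0 < ?ys ! (x - 1)" using gt by blast
      moreover have "g0 < last bs" using gt False by simp
      ultimately show "?thesis x" using hook_pp(1)[OF x] h1 mod_shift_iff assms by simp
    qed
    have B: "\<And>x. x \<in> set [1..<length ?ys + 1] \<Longrightarrow> pp S ! (x - 1) = gc S (?ys ! (x - 1))"
      using hook_pp(2) by auto
    let ?L = "[1..<length ?ys + 1]"
    have F: "filter (\<lambda>x. hook (pp S) x 1 mod l \<noteq> hook (pp S) 1 1 mod l) ?L
       = filter (\<lambda>x. (\<lambda>b. b mod int l \<noteq> last bs mod int l) (?ys ! (x - 1))) ?L"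
      by (rule filter_cong[OF refl]) (rule A)
    show ?thesis unfolding F
      by (rule map_cong[OF refl]) (rule B, simp)
  qed
  also have "\<dots> = map (gc S) (filter (\<lambda>b. b mod int l \<noteq> last bs mod int l) ?ys)"
    by (rule map_filter_nth)
  also have "\<dots> = rev (map (gc S) (filter (\<lambda>b. b mod int l \<noteq> last bs mod int l) bs))"
    by (simp add: rev_filter rev_map)
  finally show ?thesis .
qed

end

lemma pp_eq_trans:
  assumes "nice S" "nice T" "pp S = pp T"
  shows "\<exists>d. T = (\<lambda>x. x + d) ` S"
proof -
  obtain g where g: "g \<notin> S" "\<forall>y<g. y \<in> S" using exists_g0[OF assms(1)] by blast
  obtain h where h: "h \<notin> T" "\<forall>y<h. y \<in> T" using exists_g0[OF assms(2)] by blast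
  have "(\<lambda>x. x + (- g)) ` S = (\<lambda>x. x + (- h)) ` T"
    using normal_form[OF assms(1) g(1)] normal_form[OF assms(2) h(1)] g(2) h(2) assms(3) by simp
  then have "(\<lambda>x. x + h) ` ((\<lambda>x. x + (- g)) ` S) = (\<lambda>x. x + h) ` ((\<lambda>x. x + (- h)) ` T)"
    by simp
  then have "T = (\<lambda>x. x + (h - g)) ` S" by (simp add: image_image algebra_simps)
  then show ?thesis by blast
qed

lemma shift_eq_aux:
  assumes "0 < m" "length c = m" "length c' = m" "sum_list c = sum_list c'"
    "Xset m c' = (\<lambda>x. x + d) ` Xset m c" "0 \<le> d"
  shows "c' = c"
proof -
  have p: "length ((psi ^^ nat d) c) = m" "sum_list ((psi ^^ nat d) c) = sum_list c + d"
     "Xset m ((psi ^^ nat d) c) = (\<lambda>x. x + d) ` Xset m c"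
    using psi_pow[OF assms(1,2), of "nat d"] assms(6) by auto
  then have "c' = (psi ^^ nat d) c" using Xset_inj[OF assms(1) assms(3)] assms(5) by simp
  then have "d = 0" using p assms(4) by simp
  then show ?thesis using \<open>c' = (psi ^^ nat d) c\<close> by simp
qed

lemma pi_inj: assumes "0 < m" shows "inj_on (pi_core m) {c. length c = m \<and> sum_list c = 0}"
proof (rule inj_onI)
  fix c c' assume c: "c \<in> {c. length c = m \<and> sum_list c = 0}" and c': "c' \<in> {c. length c = m \<and> sum_list c = 0}"
    and e: "pi_core m c = pi_core m c'"
  have n: "nice (Xset m c)" "nice (Xset m c')" using nice_Xset assms c c' by auto
  obtain d where d: "Xset m c' = (\<lambda>x. x + d) ` Xset m c"
    using pp_eq_trans[OF n] e by (auto simp: pi_core_pp)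
  show "c = c'"
  proof (cases "0 \<le> d")
    case True then show ?thesis using shift_eq_aux[OF assms, of c c' d] c c' d by simp
  next
    case False
    have "Xset m c = (\<lambda>x. x + (- d)) ` Xset m c'" using d by (simp add: image_image)
    then show ?thesis using shift_eq_aux[OF assms, of c' c "- d"] c c' False by simp
  qed
qed


lemma decomp:
  assumes "0 < l"
  shows "y = (y div int l) * int l + int (nat (y mod int l))" "nat (y mod int l) < l"
proof -
  have "0 \<le> y mod int l" "y mod int l < int l" using assms by simp_all
  then show "y = (y div int l) * int l + int (nat (y mod int l))" "nat (y mod int l) < l"
    by auto
qed

lemma divmod_rep:
  assumes "r < l"
  shows "(q * int l + int r) div int l = q" "nat ((q * int l + int r) mod int l) = r"
  using divmod_aux[of "int l" "int r" q] assms by auto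

locale LA =
  fixes l i :: nat and a :: "int list"
  assumes l2: "2 \<le> l" and la: "length a = l" and il: "i < l"
    and imax: "\<And>j. j < l \<Longrightarrow> a ! j \<le> a ! i"
    and ilast: "\<And>j. i < j \<Longrightarrow> j < l \<Longrightarrow> a ! j < a ! i"
begin

definition cr :: "nat \<Rightarrow> nat" where "cr r = (if r < i then r else r - 1)"
definition cc :: "int list" where "cc = take i a @ drop (Suc i) a"
definition kap :: "int \<Rightarrow> int" where
  "kap y = (y div int l) * int (l - 1) + int (cr (nat (y mod int l)))"
definition UU :: "int set" where "UU = {y. nat (y mod int l) \<noteq> i}"

lemma l0: "0 < l" using l2 by simp
lemma m0: "0 < l - 1" using l2 by simp

lemma cc_len: "length cc = l - 1" using la il by (simp add: cc_def)

lemma cr_lt: "r < l \<Longrightarrow> r \<noteq> i \<Longrightarrow> cr r < l - 1"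
  unfolding cr_def using il by auto

lemma cc_nth: "r < l \<Longrightarrow> r \<noteq> i \<Longrightarrow> cc ! cr r = a ! r"
  unfolding cc_def cr_def using la il by (auto simp: nth_append)

lemma kap_rep: "r < l \<Longrightarrow> kap (q * int l + int r) = q * int (l - 1) + int (cr r)"
  unfolding kap_def using divmod_rep by simp

lemma UU_rep: "r < l \<Longrightarrow> q * int l + int r \<in> UU \<longleftrightarrow> r \<noteq> i"
  unfolding UU_def using divmod_rep by simp

lemma K1: assumes "r < l" "r \<noteq> i"
  shows "q * int l + int r \<in> Xset l a \<longleftrightarrow> kap (q * int l + int r) \<in> Xset (l - 1) cc"
  using Xset_mem_rj[OF l0 assms(1)] Xset_mem_rj[OF m0 cr_lt[OF assms]] cc_nth[OF assms] kap_rep[OF assms(1)]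
  by simp

lemma K1': "y \<in> UU \<Longrightarrow> y \<in> Xset l a \<longleftrightarrow> kap y \<in> Xset (l - 1) cc"
  using K1[of "nat (y mod int l)" "y div int l"] decomp[OF l0, of y] UU_def by simp

lemma K2: assumes "y \<in> UU" "y' \<in> UU" "y < y'" shows "kap y < kap y'"
proof -
  define q where "q = y div int l"
  define r where "r = nat (y mod int l)"
  define q' where "q' = y' div int l"
  define r' where "r' = nat (y' mod int l)"
  have y: "y = q * int l + int r" "r < l" using decomp[OF l0, of y] q_def r_def by auto
  have y': "y' = q' * int l + int r'" "r' < l" using decomp[OF l0, of y'] q'_def r'_def by auto
  have ri: "r \<noteq> i" "r' \<noteq> i" using assms UU_def r_def r'_def by auto
  have k: "kap y = q * int (l - 1) + int (cr r)" "kap y' = q' * int (l - 1) + int (cr r')"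
    using kap_rep y y' by auto
  have c1: "cr r < l - 1" "cr r' < l - 1" using cr_lt y y' ri by auto
  have "q \<le> q'"
  proof (rule ccontr)
    assume "\<not> q \<le> q'"
    then have "(q' + 1) * int l \<le> q * int l" by (simp add: mult_right_mono)
    then show False using y y' assms(3) by (simp add: algebra_simps)
  qed
  show ?thesis
  proof (cases "q < q'")
    case True
    then have "(q + 1) * int (l - 1) \<le> q' * int (l - 1)" by (simp add: mult_right_mono)
    then show ?thesis using k c1 by (simp add: algebra_simps)
  next
    case False
    then have "q = q'" using \<open>q \<le> q'\<close> by simp
    then have "r < r'" using y y' assms(3) by simp
    then have "cr r < cr r'" unfolding cr_def using ri by auto
    then show ?thesis using k \<open>q = q'\<close> by simp
  qed
qed

lemma K2': assumes "y \<in> UU" "y' \<in> UU" shows "kap y < kap y' \<longleftrightarrow> y < y'"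
  using K2[OF assms] K2[OF assms(2,1)] by (metis less_asym linorder_neqE)

lemma K3: "\<exists>y\<in>UU. kap y = z"
proof -
  define q where "q = z div int (l - 1)"
  define s where "s = nat (z mod int (l - 1))"
  have z: "z = q * int (l - 1) + int s" "s < l - 1"
    using decomp[OF m0, of z] unfolding q_def s_def by blast+
  define r where "r = (if s < i then s else s + 1)"
  have r: "r < l" "r \<noteq> i" "cr r = s" using z(2) unfolding r_def cr_def by auto
  show ?thesis
    using kap_rep[OF r(1), of q] UU_rep[OF r(1), of q] r z by (intro bexI[of _ "q * int l + int r"]) auto
qed


definition MM :: int where "MM = a ! i * int l + int i"

lemma L_rep: "y = (y div int l) * int l + int (nat (y mod int l))" "nat (y mod int l) < l"
  using decomp[OF l0] by auto

lemma L1: assumes "y \<in> Xset l a" shows "y \<le> MM"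
proof -
  define q where "q = y div int l"
  define r where "r = nat (y mod int l)"
  have y: "y = q * int l + int r" "r < l" using L_rep q_def r_def by auto
  have qa: "q \<le> a ! r" using assms Xset_mem_rj[OF l0 y(2)] y(1) by simp
  have ar: "a ! r \<le> a ! i" using imax y(2) by simp
  show ?thesis
  proof (cases "q < a ! i")
    case True
    then have "(q + 1) * int l \<le> a ! i * int l" by (simp add: mult_right_mono)
    then show ?thesis using y unfolding MM_def by (simp add: algebra_simps)
  next
    case False
    then have "q = a ! i" "a ! r = a ! i" using qa ar by auto
    then have "r \<le> i" using ilast y(2) by (metis less_irrefl not_le)
    then show ?thesis using y \<open>q = a ! i\<close> unfolding MM_def by simp
  qed
qed

lemma L2: assumes "y \<notin> Xset l a" "y \<notin> UU" shows "MM < y"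
proof -
  define q where "q = y div int l"
  have ni: "nat (y mod int l) = i" using assms(2) unfolding UU_def by simp
  have y: "y = q * int l + int i" using L_rep(1)[of y] unfolding q_def ni .
  have "\<not> q \<le> a ! i" using assms(1) Xset_mem_rj[OF l0 il] y by simp
  then have h1: "(a ! i + 1) * int l \<le> q * int l" by (simp add: mult_right_mono)
  have h2: "MM < (a ! i + 1) * int l" unfolding MM_def using il by (simp add: algebra_simps)
  show ?thesis using y h1 h2 by linarith
qed

lemma L3: "MM \<in> Xset l a"
  using Xset_mem_rj[OF l0 il] unfolding MM_def by simp

lemma MM_mod: "MM mod int l = int i" "nat (MM mod int l) = i"
  using divmod_rep[OF il, of "a ! i"] il unfolding MM_def by auto

lemma kap_inj: "inj_on kap UU"
proof (rule inj_onI)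
  fix x y assume x: "x \<in> UU" and y: "y \<in> UU" and e: "kap x = kap y"
  show "x = y"
  proof (rule ccontr)
    assume "x \<noteq> y"
    then have "x < y \<or> y < x" by linarith
    then show False using K2'[OF x y] K2'[OF y x] e by auto
  qed
qed

lemma gc_comm: assumes "x \<in> Xset l a" "x \<in> UU"
  shows "gc (Xset (l - 1) cc) (kap x) = gc (Xset l a) x"
proof -
  have e1: "{z. z \<notin> Xset (l - 1) cc \<and> z < kap x} = kap ` {y\<in>UU. y \<notin> Xset l a \<and> y < x}"
  proof
    show "{z. z \<notin> Xset (l - 1) cc \<and> z < kap x} \<subseteq> kap ` {y\<in>UU. y \<notin> Xset l a \<and> y < x}"
    proof
      fix z assume z: "z \<in> {z. z \<notin> Xset (l - 1) cc \<and> z < kap x}"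
      obtain y where y: "y \<in> UU" "kap y = z" using K3 by blast
      have "y \<notin> Xset l a" using z y K1'[OF y(1)] by simp
      moreover have "y < x" using z y K2'[OF y(1) assms(2)] by simp
      ultimately show "z \<in> kap ` {y\<in>UU. y \<notin> Xset l a \<and> y < x}" using y by blast
    qed
  next
    show "kap ` {y\<in>UU. y \<notin> Xset l a \<and> y < x} \<subseteq> {z. z \<notin> Xset (l - 1) cc \<and> z < kap x}"
    proof
      fix z assume "z \<in> kap ` {y\<in>UU. y \<notin> Xset l a \<and> y < x}"
      then obtain y where y: "y \<in> UU" "y \<notin> Xset l a" "y < x" "z = kap y" by blast
      have "z \<notin> Xset (l - 1) cc" using y K1'[OF y(1)] by simp
      moreover have "z < kap x" using y K2'[OF y(1) assms(2)] by simp
      ultimately show "z \<in> {z. z \<notin> Xset (l - 1) cc \<and> z < kap x}" by simp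
    qed
  qed
  have e2: "{y. y \<notin> Xset l a \<and> y < x} = {y\<in>UU. y \<notin> Xset l a \<and> y < x}"
  proof -
    have "y \<in> UU" if "y \<notin> Xset l a" "y < x" for y
    proof (rule ccontr)
      assume "y \<notin> UU"
      then have "MM < y" using L2 that(1) by blast
      moreover have "x \<le> MM" using L1[OF assms(1)] .
      ultimately show False using that(2) by simp
    qed
    then show ?thesis by blast
  qed
  have "inj_on kap {y\<in>UU. y \<notin> Xset l a \<and> y < x}"
    using kap_inj by (rule inj_on_subset) blast
  then show ?thesis unfolding gc_def e1 e2 by (simp add: card_image)
qed

lemma Bs_comm: "Bs (Xset (l - 1) cc) = kap ` (Bs (Xset l a) \<inter> UU)"
proof
  show "Bs (Xset (l - 1) cc) \<subseteq> kap ` (Bs (Xset l a) \<inter> UU)"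
  proof
    fix z assume z: "z \<in> Bs (Xset (l - 1) cc)"
    obtain y where y: "y \<in> UU" "kap y = z" using K3 by blast
    have yS: "y \<in> Xset l a" using z y K1'[OF y(1)] by (simp add: Bs_def)
    have "0 < gc (Xset l a) y" using z y gc_comm[OF yS y(1)] by (simp add: Bs_def)
    then have "y \<in> Bs (Xset l a)" using yS by (simp add: Bs_def)
    then show "z \<in> kap ` (Bs (Xset l a) \<inter> UU)" using y by blast
  qed
next
  show "kap ` (Bs (Xset l a) \<inter> UU) \<subseteq> Bs (Xset (l - 1) cc)"
  proof
    fix z assume "z \<in> kap ` (Bs (Xset l a) \<inter> UU)"
    then obtain y where y: "y \<in> Bs (Xset l a)" "y \<in> UU" "z = kap y" by blast
    then have yS: "y \<in> Xset l a" "0 < gc (Xset l a) y" by (auto simp: Bs_def)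
    have "z \<in> Xset (l - 1) cc" using y yS K1'[OF y(2)] by simp
    moreover have "0 < gc (Xset (l - 1) cc) z" using y yS gc_comm[OF yS(1) y(2)] by simp
    ultimately show "z \<in> Bs (Xset (l - 1) cc)" by (simp add: Bs_def)
  qed
qed

end




context LA begin

lemma sorted_le_last: assumes "sorted xs" "x \<in> set xs" shows "x \<le> last xs"
proof -
  obtain k where k: "k < length xs" "x = xs ! k" using assms(2) by (metis in_set_conv_nth)
  then have "xs \<noteq> []" by auto
  then have "last xs = xs ! (length xs - 1)" by (simp add: last_conv_nth)
  moreover have "xs ! k \<le> xs ! (length xs - 1)" using k assms(1) by (intro sorted_nth_mono) auto
  ultimately show ?thesis using k by simp
qed

lemma pp_comm: "pp (Xset (l - 1) cc) = Phi l (pp (Xset l a))"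
proof -
  let ?S = "Xset l a"
  let ?Y = "Xset (l - 1) cc"
  have nS: "nice ?S" using nice_Xset l0 la by blast
  have nY: "nice ?Y" using nice_Xset m0 cc_len by blast
  obtain g0 where g0: "g0 \<notin> ?S" "\<forall>y<g0. y \<in> ?S" using exists_g0[OF nS] by blast
  have below: "\<And>y. y < g0 \<Longrightarrow> y \<in> ?S" using g0 by blast
  let ?B = "bs ?S"
  have setB: "set ?B = Bs ?S" by (rule set_bs[OF nS g0(1) below])
  have P: "Phi l (pp ?S) = rev (map (gc ?S) (filter (\<lambda>b. b mod int l \<noteq> last ?B mod int l) ?B))"
    by (rule Phi_pp[OF nS g0(1) below l0])
  have F: "filter (\<lambda>b. b mod int l \<noteq> last ?B mod int l) ?B = filter (\<lambda>b. b \<in> UU) ?B"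
  proof (rule filter_cong[OF refl])
    fix b assume b: "b \<in> set ?B"
    then have ne: "?B \<noteq> []" by auto
    have sB: "sorted ?B" by (simp add: bs_def[OF nS g0(1) below])
    have "last ?B \<in> Bs ?S" using ne setB last_in_set by blast
    then have l1: "last ?B \<le> MM" using L1 by (simp add: Bs_def)
    have "b \<in> Bs ?S" using b setB by simp
    then have "g0 < b" "b \<le> MM" using Bs_char[OF nS g0(1) below] L1 by auto
    then have "MM \<in> Bs ?S" using Bs_char[OF nS g0(1) below] L3 by simp
    then have "MM \<le> last ?B" using sorted_le_last[OF sB] setB by simp
    then have lastM: "last ?B = MM" using l1 by simp
    have "b mod int l = int (nat (b mod int l))" using l0 by simp
    then show "(b mod int l \<noteq> last ?B mod int l) = (b \<in> UU)"
      using MM_mod lastM unfolding UU_def by auto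
  qed
  have "sorted ?B" by (simp add: bs_def[OF nS g0(1) below])
  moreover have "mono_on (set ?B) (gc ?S)" using gc_mono[OF nS] by (simp add: mono_on_def)
  ultimately have "sorted (map (gc ?S) ?B)" by (rule sorted_map_mono)
  then have sortedF: "sorted (map (gc ?S) (filter (\<lambda>b. b \<in> UU) ?B))" by (rule sorted_filter)
  have finBU: "finite (Bs ?S \<inter> UU)" using Bs_fin[OF nS] by simp
  have "mset (map (gc ?Y) (sorted_list_of_set (Bs ?Y))) = image_mset (gc ?Y) (mset_set (Bs ?Y))"
    by (rule map_sorted_mset[OF Bs_fin[OF nY]])
  also have "\<dots> = image_mset (gc ?Y) (mset_set (kap ` (Bs ?S \<inter> UU)))" by (simp only: Bs_comm)
  also have "\<dots> = image_mset (gc ?Y) (image_mset kap (mset_set (Bs ?S \<inter> UU)))"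
  proof -
    have "inj_on kap (Bs ?S \<inter> UU)" using kap_inj by (rule inj_on_subset) blast
    then show ?thesis by (simp add: image_mset_mset_set)
  qed
  also have "\<dots> = image_mset (gc ?S) (mset_set (Bs ?S \<inter> UU))"
  proof -
    have "image_mset (gc ?Y) (image_mset kap (mset_set (Bs ?S \<inter> UU)))
        = image_mset (\<lambda>x. gc ?Y (kap x)) (mset_set (Bs ?S \<inter> UU))"
      by (simp add: multiset.map_comp comp_def)
    also have "\<dots> = image_mset (gc ?S) (mset_set (Bs ?S \<inter> UU))"
    proof (rule image_mset_cong)
      fix x assume "x \<in># mset_set (Bs ?S \<inter> UU)"
      then have "x \<in> Bs ?S \<inter> UU" using finBU by simp
      then show "gc ?Y (kap x) = gc ?S x" using gc_comm by (simp add: Bs_def)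
    qed
    finally show ?thesis .
  qed
  also have "\<dots> = mset (map (gc ?S) (filter (\<lambda>b. b \<in> UU) ?B))"
  proof -
    have "distinct (filter (\<lambda>b. b \<in> UU) ?B)" by (simp add: bs_def[OF nS g0(1) below])
    then have "mset (filter (\<lambda>b. b \<in> UU) ?B) = mset_set (set (filter (\<lambda>b. b \<in> UU) ?B))"
      by (rule mset_set_set[symmetric])
    also have "set (filter (\<lambda>b. b \<in> UU) ?B) = Bs ?S \<inter> UU" using setB by auto
    finally show ?thesis by simp
  qed
  finally have ms: "mset (map (gc ?S) (filter (\<lambda>b. b \<in> UU) ?B)) = mset (map (gc ?Y) (sorted_list_of_set (Bs ?Y)))"
    by simp
  have "sort (map (gc ?Y) (sorted_list_of_set (Bs ?Y))) = map (gc ?S) (filter (\<lambda>b. b \<in> UU) ?B)"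
    by (rule properties_for_sort[OF ms sortedF])
  then have "pp ?Y = rev (map (gc ?S) (filter (\<lambda>b. b \<in> UU) ?B))" unfolding pp_def by simp
  then show ?thesis using P F by simp
qed

end


lemma sum_neg: "xs \<noteq> [] \<Longrightarrow> \<forall>x\<in>set xs. x < 0 \<Longrightarrow> sum_list xs < (0::int)"
proof (induction xs)
  case Nil then show ?case by simp
next
  case (Cons y ys) then show ?case by (cases "ys = []") auto
qed

theorem mainTheorem1:
  fixes l :: nat and a :: "int list"
  assumes "l \<ge> 2" and "length a = l" and "sum_list a = 0"
  defines "lam \<equiv> pi_core l a"
  defines "i \<equiv> Max {j. j < l \<and> a ! j = Max (set a)}"
  shows "the_inv_into {c. length c = l - 1 \<and> sum_list c = 0} (pi_core (l - 1)) (Phi l lam)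
         = (psi ^^ nat (a ! i)) (take i a @ drop (Suc i) a)"
proof -
  define J where "J = {j. j < l \<and> a ! j = Max (set a)}"
  have ane: "a \<noteq> []" using assms(1,2) by auto
  have fJ: "finite J" unfolding J_def by simp
  have "Max (set a) \<in> set a" using ane by simp
  then obtain j0 where "j0 < l" "a ! j0 = Max (set a)" using assms(2) by (metis in_set_conv_nth)
  then have "J \<noteq> {}" unfolding J_def by blast
  then have "i \<in> J" unfolding i_def J_def[symmetric] using fJ by (rule Max_in[rotated])
  then have il: "i < l" and ai: "a ! i = Max (set a)" unfolding J_def by auto
  have imax: "\<And>j. j < l \<Longrightarrow> a ! j \<le> a ! i"
    using ai assms(2) by simp
  have ilast: "\<And>j. i < j \<Longrightarrow> j < l \<Longrightarrow> a ! j < a ! i"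
  proof -
    fix j assume j: "i < j" "j < l"
    show "a ! j < a ! i"
    proof (rule ccontr)
      assume "\<not> a ! j < a ! i"
      then have "a ! j = Max (set a)" using imax[OF j(2)] ai by simp
      then have "j \<in> J" using j unfolding J_def by simp
      then have "j \<le> i" unfolding i_def J_def[symmetric] using fJ by simp
      then show False using j by simp
    qed
  qed
  interpret LA l i a using assms(1,2) il imax ilast by unfold_locales auto
  have ai0: "0 \<le> a ! i"
  proof (rule ccontr)
    assume "\<not> 0 \<le> a ! i"
    moreover have "\<And>x. x \<in> set a \<Longrightarrow> x \<le> Max (set a)" by simp
    ultimately have "\<forall>x\<in>set a. x < 0" using ai by (metis not_le order.strict_trans1)
    then have "sum_list a < 0" using sum_neg ane by blast
    then show False using assms(3) by simp
  qed
  have sc: "sum_list cc = - a ! i"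
  proof -
    have "drop i a = a ! i # drop (Suc i) a" using il assms(2) by (simp add: Cons_nth_drop_Suc)
    then have "sum_list a = sum_list (take i a) + a ! i + sum_list (drop (Suc i) a)"
      by (metis append_take_drop_id sum_list_append sum_list.Cons add.assoc)
    then show ?thesis using assms(3) unfolding cc_def by simp
  qed
  define v where "v = (psi ^^ nat (a ! i)) cc"
  have pv: "length v = l - 1" "sum_list v = sum_list cc + int (nat (a ! i))"
     "Xset (l - 1) v = (\<lambda>x. x + int (nat (a ! i))) ` Xset (l - 1) cc"
    using psi_pow[OF m0 cc_len, of "nat (a ! i)"] unfolding v_def by auto
  have vA: "v \<in> {c. length c = l - 1 \<and> sum_list c = 0}" using pv sc ai0 by simp
  have "pi_core (l - 1) v = pp (Xset (l - 1) cc)"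
    unfolding pi_core_pp pv(3) by (rule pp_trans[OF nice_Xset[OF m0 cc_len]])
  also have "\<dots> = Phi l lam" unfolding lam_def pi_core_pp by (rule pp_comm)
  finally have "the_inv_into {c. length c = l - 1 \<and> sum_list c = 0} (pi_core (l - 1)) (Phi l lam) = v"
    using the_inv_into_f_f[OF pi_inj[OF m0] vA] by simp
  then show ?thesis unfolding v_def cc_def .
qed

end
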